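(* For every real $c>0$ and all integers $n,k\ge0$, $$|\beta_k^n|=\Big|\int_{-1}^1\overline P_k(x)\,\psi_{n,c}(x)\,dx\Big|\le\Big(\frac c2\Big)^k\frac{\sqrt\pi}{\Gamma(k+3/2)}\,\frac{1}{|\mu_n(c)|}.$$
   Context: $\overline P_k=\sqrt{k+1/2}\,P_k$ is the $L^2([-1,1])$-normalized Legendre polynomial. The prolate spheroidal wave functions $\psi_{n,c}$ (normalized by $\int_{-1}^1|\psi_{n,c}|^2=1$) are the eigenfunctions of the finite Fourier transform $Q_cf(x)=\int_{-1}^1e^{icxy}f(y)\,dy$ on $L^2([-1,1])$: $Q_c\psi_{n,c}=\mu_n(c)\psi_{n,c}$, with $\mu_n(c)\ne0$. $\Gamma$ is the Gamma function. *)

theory Defs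
  imports "HOL-Analysis.Analysis"
begin

fun legendre :: "nat \<Rightarrow> real \<Rightarrow> real" where
  "legendre 0 x = 1"
| "legendre (Suc 0) x = x"
| "legendre (Suc (Suc n)) x =
     ((2 * real n + 3) * x * legendre (Suc n) x - (real n + 1) * legendre n x) / (real n + 2)"

text \<open>L^2([-1,1])-normalized Legendre polynomial.\<close>
definition legendre_norm :: "nat \<Rightarrow> real \<Rightarrow> real" where
  "legendre_norm k x = sqrt (real k + 1/2) * legendre k x"

definition finite_fourier :: "real \<Rightarrow> (real \<Rightarrow> complex) \<Rightarrow> real \<Rightarrow> complex" where
  "finite_fourier c f x = (LINT y:{-1..1}|lborel. cis (c * x * y) * f y)"

end

theory Submission
  imports Defs "HOL-Computational_Algebra.Polynomial"
begin


definition Xp :: "real poly" where "Xp = [:0,1:]"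
definition qp :: "real poly" where "qp = [:-1,0,1:]"
definition U :: "nat \<Rightarrow> real poly" where
  "U k = smult (1 / (2^k * fact k)) (qp ^ k)"
definition R :: "nat \<Rightarrow> real poly" where
  "R k = (pderiv ^^ k) (U k)"

lemma pderiv_Xp: "pderiv Xp = 1"
  by (simp add: Xp_def pderiv_pCons)
lemma pderiv_qp': "pderiv qp = smult 2 Xp"
  by (simp add: qp_def Xp_def pderiv_pCons)
lemma pderiv_qp: "pderiv qp = 2 * Xp"
  by (simp add: pderiv_qp' numeral_poly)
lemma qp_Xp: "qp = Xp * Xp - 1"
  by (simp add: qp_def Xp_def one_pCons)
lemma pderiv_ofnat_mult: "pderiv (of_nat n * p) = of_nat n * pderiv p"
  by (simp add: pderiv_mult)
lemma pderiv_num_mult: "pderiv (numeral n * p) = numeral n * pderiv p"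
  by (simp add: pderiv_mult)

lemma U_Suc: "U (Suc k) = smult (1 / (2 * real k + 2)) (qp * U k)"
  by (simp add: U_def field_simps)

lemma pderiv_U_Suc: "pderiv (U (Suc k)) = Xp * U k"
proof -
  have "pderiv (U (Suc k)) = smult (1 / (2^(Suc k) * fact (Suc k))) (smult (of_nat (Suc k)) (qp ^ k) * pderiv qp)"
    unfolding U_def pderiv_smult pderiv_power_Suc ..
  also have "\<dots> = smult (1 / (2^(Suc k) * fact (Suc k)) * (of_nat (Suc k) * 2)) (Xp * qp ^ k)"
    by (simp only: pderiv_qp' mult_smult_left mult_smult_right smult_smult mult.commute)
  also have "1 / (2^(Suc k) * fact (Suc k)) * (of_nat (Suc k) * 2) = (1 / (2^k * fact k) :: real)"
    by (simp add: fact_Suc del: of_nat_Suc)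
  finally show ?thesis by (simp add: U_def mult_smult_right)
qed

lemma leib_X: "(pderiv ^^ Suc n) (Xp * p) = Xp * (pderiv ^^ Suc n) p + of_nat (Suc n) * ((pderiv ^^ n) p)"
proof (induction n)
  case 0 then show ?case by (simp add: pderiv_mult pderiv_Xp)
next
  case (Suc n)
  have "(pderiv ^^ Suc (Suc n)) (Xp * p) = pderiv ((pderiv ^^ Suc n) (Xp * p))" by simp
  also have "\<dots> = pderiv (Xp * (pderiv ^^ Suc n) p + of_nat (Suc n) * ((pderiv ^^ n) p))"
    using Suc by simp
  also have "\<dots> = Xp * (pderiv ^^ Suc (Suc n)) p + of_nat (Suc (Suc n)) * ((pderiv ^^ Suc n) p)"
    by (simp only: pderiv_mult pderiv_add pderiv_ofnat_mult pderiv_Xp funpow.simps o_apply of_nat_Suc) (simp add: algebra_simps)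
  finally show ?case .
qed

lemma leib_q: "(pderiv ^^ Suc (Suc n)) (qp * p) = qp * (pderiv ^^ Suc (Suc n)) p
   + 2 * of_nat (Suc (Suc n)) * (Xp * (pderiv ^^ Suc n) p)
   + of_nat (Suc (Suc n)) * of_nat (Suc n) * ((pderiv ^^ n) p)"
proof (induction n)
  case 0 then show ?case by (simp add: pderiv_mult pderiv_qp pderiv_Xp pderiv_add pderiv_num_mult algebra_simps)
next
  case (Suc n)
  have "(pderiv ^^ Suc (Suc (Suc n))) (qp * p) = pderiv ((pderiv ^^ Suc (Suc n)) (qp * p))" by simp
  also have "\<dots> = qp * (pderiv ^^ Suc (Suc (Suc n))) p
   + 2 * of_nat (Suc (Suc (Suc n))) * (Xp * (pderiv ^^ Suc (Suc n)) p)
   + of_nat (Suc (Suc (Suc n))) * of_nat (Suc (Suc n)) * ((pderiv ^^ Suc n) p)"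
    unfolding Suc
    by (simp only: pderiv_mult pderiv_add pderiv_ofnat_mult pderiv_num_mult pderiv_qp pderiv_Xp funpow.simps o_apply of_nat_Suc pderiv_1 pderiv_numeral) (simp add: algebra_simps)
  finally show ?case .
qed

lemma smult_of_nat: "smult (of_nat n) p = of_nat n * p"
  by (simp add: of_nat_poly)

lemma pderiv_pow_ofnat: "(pderiv ^^ n) (of_nat m * p) = of_nat m * (pderiv ^^ n) (p :: real poly)"
  by (induction n) (simp_all only: funpow.simps o_apply id_apply pderiv_ofnat_mult)

lemma U_0: "U 0 = 1" by (simp add: U_def)

lemma R_0: "R 0 = 1" by (simp add: R_def U_0)
lemma R_1: "R (Suc 0) = Xp" by (simp add: R_def pderiv_U_Suc[of 0, simplified] U_0)

lemma R_a: "R (Suc (Suc m)) = Xp * R (Suc m) + of_nat (Suc m) * (pderiv ^^ m) (U (Suc m))"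
proof -
  have "R (Suc (Suc m)) = (pderiv ^^ Suc m) (pderiv (U (Suc (Suc m))))"
    unfolding R_def funpow_Suc_right o_apply ..
  also have "\<dots> = (pderiv ^^ Suc m) (Xp * U (Suc m))" by (simp add: pderiv_U_Suc)
  also have "\<dots> = Xp * R (Suc m) + of_nat (Suc m) * (pderiv ^^ m) (U (Suc m))"
    unfolding leib_X R_def ..
  finally show ?thesis .
qed

lemma R_b: "pderiv (R (Suc k)) = of_nat (Suc k) * R k + Xp * pderiv (R k)"
proof (cases k)
  case 0 then show ?thesis by (simp add: R_1 R_0 pderiv_Xp)
next
  case (Suc m)
  have "pderiv ((pderiv ^^ m) (U (Suc m))) = R (Suc m)" by (simp add: R_def)
  then show ?thesis unfolding Suc R_a
    by (simp add: pderiv_add pderiv_mult pderiv_ofnat_mult pderiv_Xp algebra_simps)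
qed

lemma R_c: "of_nat (Suc k) * R (Suc k) = qp * pderiv (R k) + of_nat (Suc k) * (Xp * R k)"
proof (cases k)
  case 0 then show ?thesis by (simp add: R_1 R_0 pderiv_Xp)
next
  case (Suc m)
  have e1: "of_nat (2 * Suc k) * U (Suc k) = qp * U k"
  proof -
    have "of_nat (2*Suc k) * U (Suc k) = smult (of_nat (2*Suc k)) (smult (1/(2*real k+2)) (qp*U k))"
      by (simp only: U_Suc smult_of_nat)
    also have "\<dots> = smult (of_nat (2*Suc k) * (1/(2*real k+2))) (qp*U k)" by (simp only: smult_smult)
    also have "of_nat (2*Suc k) * (1/(2*real k+2)) = (1::real)" by (simp add: field_simps)
    finally show ?thesis by simp
  qed
  have "(pderiv ^^ Suc k) (of_nat (2 * Suc k) * U (Suc k)) = of_nat (2 * Suc k) * R (Suc k)"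
    unfolding R_def by (rule pderiv_pow_ofnat)
  also have "(pderiv ^^ Suc k) (of_nat (2 * Suc k) * U (Suc k)) = (pderiv ^^ Suc (Suc m)) (qp * U k)"
    using e1 Suc by simp
  also have "\<dots> = qp * pderiv (R k) + 2 * of_nat (Suc k) * (Xp * R k) + of_nat (Suc k) * of_nat k * (pderiv ^^ m) (U k)"
    unfolding leib_q R_def Suc by simp
  finally have A: "of_nat (2 * Suc k) * R (Suc k) = qp * pderiv (R k) + 2 * of_nat (Suc k) * (Xp * R k) + of_nat (Suc k) * of_nat k * (pderiv ^^ m) (U k)" by (rule sym)
  have B: "of_nat k * (pderiv ^^ m) (U k) = R (Suc k) - Xp * R k"
    using R_a[of m] Suc by simp
  have "of_nat (2 * Suc k) * R (Suc k) = qp * pderiv (R k) + 2 * of_nat (Suc k) * (Xp * R k) + of_nat (Suc k) * (R (Suc k) - Xp * R k)"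
    using A B by (simp add: mult.assoc)
  then show ?thesis by (simp add: algebra_simps)
qed

lemma R_rec: "of_nat (Suc (Suc n)) * R (Suc (Suc n)) = of_nat (2 * n + 3) * (Xp * R (Suc n)) - of_nat (Suc n) * R n"
proof -
  have c1: "of_nat (Suc (Suc n)) * R (Suc (Suc n)) = qp * pderiv (R (Suc n)) + of_nat (Suc (Suc n)) * (Xp * R (Suc n))"
    by (rule R_c)
  have c0: "qp * pderiv (R n) = of_nat (Suc n) * R (Suc n) - of_nat (Suc n) * (Xp * R n)"
    using R_c[of n] by (simp add: algebra_simps)
  have "qp * pderiv (R (Suc n)) = of_nat (Suc n) * (qp * R n) + Xp * (qp * pderiv (R n))"
    by (simp add: R_b algebra_simps)
  also have "\<dots> = of_nat (Suc n) * (Xp * R (Suc n)) - of_nat (Suc n) * R n"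
    by (subst c0) (simp add: qp_Xp algebra_simps)
  finally show ?thesis unfolding c1 by (simp add: algebra_simps)
qed

lemma legendre_R: "legendre k x = poly (R k) x"
proof (induction k x rule: legendre.induct)
  case (1 x) then show ?case by (simp add: R_0)
next
  case (2 x) then show ?case by (simp add: R_1 Xp_def)
next
  case (3 n x)
  have "poly (of_nat (Suc (Suc n)) * R (Suc (Suc n))) x = poly (of_nat (2 * n + 3) * (Xp * R (Suc n)) - of_nat (Suc n) * R n) x"
    by (simp only: R_rec)
  then have "(real n + 2) * poly (R (Suc (Suc n))) x = (2 * real n + 3) * x * poly (R (Suc n)) x - (real n + 1) * poly (R n) x"
    by (simp add: of_nat_poly Xp_def algebra_simps)
  then show ?case using 3 by (simp add: field_simps)
qed



lemma pow_qp_factor: "j \<le> k \<Longrightarrow> \<exists>r. (pderiv ^^ j) (qp ^ k * p) = qp ^ (k - j) * r"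
proof (induction j)
  case 0 then show ?case by auto
next
  case (Suc j)
  then obtain r where r: "(pderiv ^^ j) (qp ^ k * p) = qp ^ (k - j) * r" by auto
  obtain m where m: "k - j = Suc m" using Suc.prems by (metis Suc_diff_le Suc_le_lessD diff_Suc_Suc diff_is_0_eq' less_imp_le_nat nat.exhaust zero_less_Suc diff_le_self le_add_diff_inverse2 Suc_le_D)
  have km: "k - Suc j = m" using m by simp
  have "(pderiv ^^ Suc j) (qp ^ k * p) = pderiv (qp ^ Suc m * r)" using r m by simp
  also have "\<dots> = qp ^ m * (smult (of_nat (Suc m)) (pderiv qp * r) + qp * pderiv r)"
    apply (simp only: pderiv_mult pderiv_power_Suc)
    apply (simp add: algebra_simps)
    done
  finally show ?case using km by blast
qed

lemma poly_qp_pm1: "poly qp 1 = 0" "poly qp (-1) = 0"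
  by (simp_all add: qp_def)

lemma U_vanish:
  assumes "j < k" "x = 1 \<or> x = -1"
  shows "poly ((pderiv ^^ j) (U k)) x = 0"
proof -
  have "U k = qp ^ k * [:1 / (2^k * fact k):]" by (simp add: U_def)
  moreover obtain r where "(pderiv ^^ j) (qp ^ k * [:1 / (2^k * fact k):]) = qp ^ (k - j) * r"
    using pow_qp_factor[of j k "[:1 / (2^k * fact k):]"] assms(1) less_imp_le by blast
  ultimately have "(pderiv ^^ j) (U k) = qp ^ (k - j) * r" by simp
  moreover have "k - j > 0" using assms(1) by simp
  ultimately show ?thesis using assms(2) poly_qp_pm1 by (auto simp: zero_power)
qed

lemma cis_vd: "((\<lambda>x. cis (a*x)) has_vector_derivative (\<i> * of_real a * cis (a*x))) (at x within S)"
proof -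
  have "((\<lambda>x. a*x) has_derivative (\<lambda>t. a*t)) (at x within S)"
    by (auto intro!: derivative_eq_intros)
  from has_derivative_cis[OF this] show ?thesis
    unfolding has_vector_derivative_def
    by (rule has_derivative_eq_rhs) (auto simp: fun_eq_iff scaleR_conv_of_real algebra_simps)
qed

lemma cont_pc: "continuous_on S (\<lambda>x. complex_of_real (poly p x) * cis (a*x))"
  by (intro continuous_intros)

lemma int_pc: "(\<lambda>x. complex_of_real (poly p x) * cis (a*x)) integrable_on {u..v}"
  by (rule integrable_continuous_interval) (rule cont_pc)

lemma ibp:
  assumes "poly p 1 = 0" "poly p (-1) = 0"
  shows "integral {-1..1} (\<lambda>x. complex_of_real (poly (pderiv p) x) * cis (a*x))
       = - (\<i> * of_real a) * integral {-1..1} (\<lambda>x. complex_of_real (poly p x) * cis (a*x))"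
proof -
  let ?F = "\<lambda>x. complex_of_real (poly p x) * cis (a*x)"
  let ?G = "\<lambda>x. complex_of_real (poly (pderiv p) x) * cis (a*x)"
  have "((\<lambda>x. ?G x + (\<i> * of_real a) * ?F x) has_integral ?F 1 - ?F (-1)) {-1..1}"
  proof (rule fundamental_theorem_of_calculus)
    fix x :: real assume "x \<in> {-1..1}"
    have "((\<lambda>x. complex_of_real (poly p x)) has_vector_derivative complex_of_real (poly (pderiv p) x)) (at x within {-1..1})"
      by (intro has_vector_derivative_of_real) (rule DERIV_subset[OF poly_DERIV], simp)
    from has_vector_derivative_mult[OF this cis_vd]
    have D: "(?F has_vector_derivative (complex_of_real (poly p x) * (\<i> * of_real a * cis (a*x)) + complex_of_real (poly (pderiv p) x) * cis (a*x))) (at x within {-1..1})" .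
    have E: "complex_of_real (poly p x) * (\<i> * of_real a * cis (a*x)) + complex_of_real (poly (pderiv p) x) * cis (a*x) = ?G x + (\<i> * of_real a) * ?F x"
      by (simp add: algebra_simps)
    show "(?F has_vector_derivative ?G x + (\<i> * of_real a) * ?F x) (at x within {-1..1})"
      using D unfolding E .
  qed simp
  then have "((\<lambda>x. ?G x + (\<i> * of_real a) * ?F x) has_integral 0) {-1..1}"
    using assms by simp
  then have "integral {-1..1} (\<lambda>x. ?G x + (\<i> * of_real a) * ?F x) = 0"
    by (rule integral_unique)
  moreover have "integral {-1..1} (\<lambda>x. ?G x + (\<i> * of_real a) * ?F x) = integral {-1..1} ?G + (\<i> * of_real a) * integral {-1..1} ?F"
    by (subst integral_add) (auto intro!: integrable_continuous_interval continuous_intros simp: integral_mult_right)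
  ultimately show ?thesis by (simp add: eq_neg_iff_add_eq_0 algebra_simps)
qed

lemma ibp_iter:
  assumes "j \<le> k"
  shows "integral {-1..1} (\<lambda>x. complex_of_real (poly ((pderiv ^^ j) (U k)) x) * cis (a*x))
       = (- (\<i> * of_real a)) ^ j * integral {-1..1} (\<lambda>x. complex_of_real (poly (U k) x) * cis (a*x))"
  using assms
proof (induction j)
  case 0 then show ?case by simp
next
  case (Suc j)
  have "integral {-1..1} (\<lambda>x. complex_of_real (poly ((pderiv ^^ Suc j) (U k)) x) * cis (a*x))
     = - (\<i> * of_real a) * integral {-1..1} (\<lambda>x. complex_of_real (poly ((pderiv ^^ j) (U k)) x) * cis (a*x))"
    using ibp[of "(pderiv ^^ j) (U k)" a] U_vanish[of j k] Suc.prems by simp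
  then show ?case using Suc by simp
qed

lemma R_integral: "integral {-1..1} (\<lambda>x. complex_of_real (legendre k x) * cis (a*x))
       = (- (\<i> * of_real a)) ^ k * integral {-1..1} (\<lambda>x. complex_of_real (poly (U k) x) * cis (a*x))"
  unfolding legendre_R R_def by (rule ibp_iter) simp



definition W :: "nat \<Rightarrow> real" where "W k = integral {-1..1} (\<lambda>x. (1 - x^2)^k)"

lemma int_W: "(\<lambda>x::real. (1 - x^2)^k) integrable_on {-1..1}"
  by (intro integrable_continuous_interval continuous_intros)

lemma W_0: "W 0 = 2" by (simp add: W_def)

lemma W_Suc: "(2 * real k + 3) * W (Suc k) = (2 * real k + 2) * W k"
proof -
  let ?H = "\<lambda>x::real. x * (1 - x^2)^(Suc k)"
  let ?h = "\<lambda>x::real. (2 * real k + 3) * (1 - x^2)^Suc k - (2 * real k + 2) * (1 - x^2)^k"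
  have "(?h has_integral ?H 1 - ?H (-1)) {-1..1}"
  proof (rule fundamental_theorem_of_calculus)
    fix x :: real assume "x \<in> {-1..1}"
    have d0: "((\<lambda>x::real. 1 - x^2) has_real_derivative - (2 * x)) (at x within {-1..1})"
      by (auto intro!: derivative_eq_intros)
    have d1: "((\<lambda>x::real. (1 - x^2)^Suc k) has_real_derivative (1 + of_nat k) * (- (2 * x) * (1 - x^2)^k)) (at x within {-1..1})"
      by (rule DERIV_power_Suc[OF d0])
    have D: "(?H has_real_derivative (x * ((1 + of_nat k) * (- (2 * x) * (1 - x^2)^k)) + 1 * (1 - x^2)^Suc k)) (at x within {-1..1})"
      by (rule DERIV_mult'[OF DERIV_ident d1])
    have E: "x * ((1 + of_nat k) * (- (2 * x) * (1 - x^2)^k)) + 1 * (1 - x^2)^Suc k = (1 - x^2)^Suc k + x * (real (Suc k) * (1 - x^2)^k * (- (2 * x)))"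
      by (simp add: algebra_simps)
    have "(?H has_real_derivative (1 - x^2)^Suc k + x * (real (Suc k) * (1 - x^2)^k * (- (2 * x)))) (at x within {-1..1})"
      using D unfolding E .
    moreover have "(1 - x^2)^Suc k + x * (real (Suc k) * (1 - x^2)^k * (- (2 * x))) = ?h x"
    proof -
      have "x * (real (Suc k) * (1 - x^2)^k * (- (2 * x))) = (2 * real k + 2) * (1 - x^2)^k * (1 - x^2) - (2 * real k + 2) * (1 - x^2)^k"
        by (simp add: algebra_simps power2_eq_square)
      then show ?thesis by (simp add: algebra_simps)
    qed
    ultimately show "(?H has_vector_derivative ?h x) (at x within {-1..1})"
      by (simp add: has_real_derivative_iff_has_vector_derivative)
  qed simp
  then have "integral {-1..1} ?h = 0" by (simp add: integral_unique)
  moreover have "integral {-1..1} ?h = (2 * real k + 3) * W (Suc k) - (2 * real k + 2) * W k"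
    unfolding W_def by (subst integral_diff) (auto intro!: integrable_continuous_interval continuous_intros simp: integral_mult_right simp del: power_Suc)
  ultimately show ?thesis by simp
qed

lemma pos_not_nonpos_Int: "(x::real) > 0 \<Longrightarrow> x \<notin> \<int>\<^sub>\<le>\<^sub>0"
  by (auto elim!: nonpos_Ints_cases)

lemma Gamma_pos_step: "Gamma (real (Suc k) + 3/2) = (real k + 3/2) * Gamma (real k + 3/2)"
proof -
  have "real k + 3/2 \<notin> \<int>\<^sub>\<le>\<^sub>0" by (rule pos_not_nonpos_Int) simp
  then show ?thesis using Gamma_plus1[of "real k + 3/2"] by (simp add: add_ac)
qed

lemma W_Gamma: "W k / (2^k * fact k) = sqrt pi / (2^k * Gamma (real k + 3/2))"
proof (induction k)
  case 0
  have "Gamma (3/2::real) = 1/2 * Gamma (1/2)"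
    using Gamma_plus1[OF pos_not_nonpos_Int[of "1/2"]] by simp
  then have G: "Gamma (3/2::real) = sqrt pi / 2" by (simp add: Gamma_one_half_real)
  have "sqrt pi / Gamma (3/2) = 2" unfolding G by simp
  then show ?case by (simp add: W_0)
next
  case (Suc k)
  have g: "Gamma (real k + 3/2) > 0" by (intro Gamma_real_pos) simp
  have "W (Suc k) = (2 * real k + 2) * W k / (2 * real k + 3)"
    using W_Suc[of k] by (simp add: field_simps)
  moreover have aux: "\<And>A c w d. (A::real) \<noteq> 0 \<Longrightarrow> c \<noteq> 0 \<Longrightarrow> (2*c*w/d)/(2*(c*A)) = w/A/d"
    by (simp add: field_simps)
  moreover have "(2::real)^Suc k * fact (Suc k) = 2 * ((real k + 1) * (2^k * fact k))"
    by (simp add: fact_Suc algebra_simps)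
  moreover have "2 * real k + 2 = 2 * (real k + 1)" by simp
  ultimately have "W (Suc k) / (2^Suc k * fact (Suc k)) = (W k / (2^k * fact k)) / (2 * real k + 3)"
    by (metis aux add_nonneg_eq_0_iff of_nat_0_le_iff zero_neq_one fact_nonzero mult_eq_0_iff power_not_zero zero_neq_numeral)
  also have "\<dots> = sqrt pi / (2^Suc k * Gamma (real (Suc k) + 3/2))"
  proof -
    have aux2: "\<And>s P G (r::real). G \<noteq> 0 \<Longrightarrow> P \<noteq> 0 \<Longrightarrow> r \<ge> 0 \<Longrightarrow> s/(P*G)/(2*r+3) = s/((2*P)*((r+3/2)*G))"
    proof -
      fix s P G r :: real
      have e: "(2*P)*((r+3/2)*G) = (P*G)*(2*r+3)" by (simp add: algebra_simps)
      show "s/(P*G)/(2*r+3) = s/((2*P)*((r+3/2)*G))" unfolding e by (simp add: divide_divide_eq_left)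
    qed
    show ?thesis unfolding Suc Gamma_pos_step power_Suc using g aux2[of "Gamma (real k + 3/2)" "2^k" "real k" "sqrt pi"] by simp
  qed
  finally show ?case .
qed

lemma poly_U: "poly (U k) x = (x^2 - 1)^k / (2^k * fact k)"
  by (simp add: U_def qp_def poly_power power2_eq_square algebra_simps)

lemma U_cis_bound:
  "norm (integral {-1..1} (\<lambda>x. complex_of_real (poly (U k) x) * cis (a*x))) \<le> sqrt pi / (2^k * Gamma (real k + 3/2))"
proof -
  have "norm (integral {-1..1} (\<lambda>x. complex_of_real (poly (U k) x) * cis (a*x))) \<le> integral {-1..1} (\<lambda>x. (1 - x^2)^k / (2^k * fact k))"
  proof (rule integral_norm_bound_integral)
    show "(\<lambda>x. complex_of_real (poly (U k) x) * cis (a*x)) integrable_on {-1..1}" by (rule int_pc)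
    show "(\<lambda>x. (1 - x^2)^k / ((2::real)^k * fact k)) integrable_on {-1..1}"
      by (intro integrable_continuous_interval continuous_intros) auto
  next
    fix x :: real assume x: "x \<in> {-1..1}"
    then have "x^2 \<le> 1" by (auto simp: abs_square_le_1)
    then have h: "\<bar>x^2 - 1\<bar> = 1 - x^2" by simp
    have "\<bar>(x^2 - 1)^k\<bar> = (1 - x^2)^k"
      by (simp only: power_abs h)
    have "norm (complex_of_real (poly (U k) x) * cis (a*x)) = \<bar>poly (U k) x\<bar>"
      by (simp only: norm_mult norm_of_real norm_cis mult_1_right)
    also have "\<dots> = \<bar>(x^2 - 1)^k\<bar> / (2^k * fact k)" by (simp add: poly_U)
    finally show "norm (complex_of_real (poly (U k) x) * cis (a*x)) \<le> (1 - x^2)^k / (2^k * fact k)"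
      using \<open>\<bar>(x^2 - 1)^k\<bar> = (1 - x^2)^k\<close> by simp
  qed
  also have "\<dots> = W k / (2^k * fact k)" unfolding W_def by (simp add: divide_inverse)
  finally show ?thesis using W_Gamma by simp
qed

lemma legendre_cis_bound:
  "norm (integral {-1..1} (\<lambda>x. complex_of_real (legendre k x) * cis (a*x))) \<le> \<bar>a\<bar>^k * (sqrt pi / (2^k * Gamma (real k + 3/2)))"
proof -
  have "\<bar>a\<bar>^k * norm (integral {-1..1} (\<lambda>x. complex_of_real (poly (U k) x) * cis (a*x))) \<le> \<bar>a\<bar>^k * (sqrt pi / (2^k * Gamma (real k + 3/2)))"
    by (rule mult_left_mono[OF U_cis_bound]) simp
  then show ?thesis unfolding R_integral by (simp add: norm_mult norm_power)
qed



lemma cont_legendre_norm: "continuous_on S (legendre_norm k)"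
  unfolding legendre_norm_def[abs_def] legendre_R by (intro continuous_intros)

lemma meas_legendre_norm[measurable]: "legendre_norm k \<in> borel_measurable borel"
  by (rule borel_measurable_continuous_onI) (rule cont_legendre_norm)

lemma meas_cis[measurable]: "cis \<in> borel_measurable borel"
  by (rule borel_measurable_continuous_onI) (intro continuous_intros)

lemma kernel_bound:
  "norm (LINT x:{-1..1}|lborel. complex_of_real (legendre_norm k x) * cis (c*x*y))
     \<le> sqrt (real k + 1/2) * (\<bar>c*y\<bar>^k * (sqrt pi / (2^k * Gamma (real k + 3/2))))"
proof -
  have si: "set_integrable lborel {-1..1} (\<lambda>x. complex_of_real (legendre_norm k x) * cis (c*x*y))"
    unfolding set_integrable_def
    by (rule borel_integrable_compact) (auto intro!: continuous_intros cont_legendre_norm[THEN continuous_on_compose2[where f="\<lambda>x. x"]] simp: continuous_on_of_real)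
  have "(LINT x:{-1..1}|lborel. complex_of_real (legendre_norm k x) * cis (c*x*y))
      = integral {-1..1} (\<lambda>x. complex_of_real (legendre_norm k x) * cis (c*x*y))"
    by (rule set_borel_integral_eq_integral(2)[OF si])
  also have "\<dots> = integral {-1..1} (\<lambda>x. complex_of_real (sqrt (real k + 1/2)) * (complex_of_real (legendre k x) * cis ((c*y)*x)))"
    by (simp add: legendre_norm_def mult_ac)
  also have "\<dots> = complex_of_real (sqrt (real k + 1/2)) * integral {-1..1} (\<lambda>x. complex_of_real (legendre k x) * cis ((c*y)*x))"
    by (rule integral_mult_right)
  finally have e: "(LINT x:{-1..1}|lborel. complex_of_real (legendre_norm k x) * cis (c*x*y)) = complex_of_real (sqrt (real k + 1/2)) * integral {-1..1} (\<lambda>x. complex_of_real (legendre k x) * cis ((c*y)*x))" .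
  have "sqrt (real k + 1/2) * norm (integral {-1..1} (\<lambda>x. complex_of_real (legendre k x) * cis ((c*y)*x)))
     \<le> sqrt (real k + 1/2) * (\<bar>c*y\<bar>^k * (sqrt pi / (2^k * Gamma (real k + 3/2))))"
    by (rule mult_left_mono[OF legendre_cis_bound]) simp
  then show ?thesis unfolding e norm_mult by simp
qed



lemma psi_integrable:
  fixes \<psi> :: "real \<Rightarrow> real"
  assumes meas[measurable]: "\<psi> \<in> borel_measurable lborel"
    and sq: "set_integrable lborel {-1..1} (\<lambda>x. (\<psi> x)\<^sup>2)"
  shows "integrable lborel (\<lambda>x. indicator {-1..1} x *\<^sub>R \<psi> x)"
proof (rule Bochner_Integration.integrable_bound[where f="\<lambda>x. indicator {-1..1} x *\<^sub>R (1::real) + indicator {-1..1} x *\<^sub>R (\<psi> x)\<^sup>2"])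
  have "integrable lborel (\<lambda>x::real. indicator {-1..1} x *\<^sub>R (1::real))"
    by (rule borel_integrable_compact) (auto simp: compact_Icc)
  then show "integrable lborel (\<lambda>x. indicator {-1..1} x *\<^sub>R (1::real) + indicator {-1..1} x *\<^sub>R (\<psi> x)\<^sup>2)"
    using sq unfolding set_integrable_def by (rule Bochner_Integration.integrable_add)
  show "(\<lambda>x. indicator {-1..1} x *\<^sub>R \<psi> x) \<in> borel_measurable lborel" by measurable
  show "AE x in lborel. norm (indicator {-1..1} x *\<^sub>R \<psi> x) \<le> norm (indicator {-1..1} x *\<^sub>R (1::real) + indicator {-1..1} x *\<^sub>R (\<psi> x)\<^sup>2)"
  proof (rule AE_I2)
    fix x
    have h1: "0 \<le> (\<bar>\<psi> x\<bar> - 1)\<^sup>2" by simp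
    have h2: "(\<bar>\<psi> x\<bar> - 1)\<^sup>2 = (\<psi> x)\<^sup>2 - 2 * \<bar>\<psi> x\<bar> + 1"
      by (simp add: power2_diff)
    have "\<bar>\<psi> x\<bar> \<le> 1 + (\<psi> x)\<^sup>2" using h1 h2 abs_ge_zero[of "\<psi> x"] by linarith
    then show "norm (indicator {-1..1} x *\<^sub>R \<psi> x) \<le> norm (indicator {-1..1} x *\<^sub>R (1::real) + indicator {-1..1} x *\<^sub>R (\<psi> x)\<^sup>2)"
      by (auto simp: indicator_def)
  qed
qed

lemma cs_bound:
  fixes \<psi> :: "real \<Rightarrow> real"
  assumes meas[measurable]: "\<psi> \<in> borel_measurable lborel"
    and sq: "set_integrable lborel {-1..1} (\<lambda>x. (\<psi> x)\<^sup>2)"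
    and norm1: "(LINT x:{-1..1}|lborel. (\<psi> x)\<^sup>2) = 1"
  shows "integrable lborel (\<lambda>y. indicator {-1..1} y *\<^sub>R (\<bar>\<psi> y\<bar> * \<bar>y\<bar>^k))"
    and "(\<integral>y. indicator {-1..1} y *\<^sub>R (\<bar>\<psi> y\<bar> * \<bar>y\<bar>^k) \<partial>lborel) \<le> sqrt (2 / (2 * real k + 1))"
proof -
  have ip: "integrable lborel (\<lambda>x. indicator {-1..1} x *\<^sub>R \<psi> x)"
    by (rule psi_integrable[OF meas sq])
  show i1: "integrable lborel (\<lambda>y. indicator {-1..1} y *\<^sub>R (\<bar>\<psi> y\<bar> * \<bar>y\<bar>^k))"
  proof (rule Bochner_Integration.integrable_bound[OF ip])
    show "(\<lambda>y. indicator {-1..1} y *\<^sub>R (\<bar>\<psi> y\<bar> * \<bar>y\<bar>^k)) \<in> borel_measurable lborel" by measurable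
    show "AE x in lborel. norm (indicator {-1..1} x *\<^sub>R (\<bar>\<psi> x\<bar> * \<bar>x\<bar>^k)) \<le> norm (indicator {-1..1} x *\<^sub>R \<psi> x)"
    proof (rule AE_I2)
      fix x :: real
      show "norm (indicator {-1..1} x *\<^sub>R (\<bar>\<psi> x\<bar> * \<bar>x\<bar>^k)) \<le> norm (indicator {-1..1} x *\<^sub>R \<psi> x)"
      proof (cases "x \<in> {-1..1}")
        case True
        then have "\<bar>x\<bar>^k \<le> 1" by (intro power_le_one) auto
        then have "\<bar>\<psi> x\<bar> * \<bar>x\<bar>^k \<le> \<bar>\<psi> x\<bar>" using mult_left_mono[of _ 1 "\<bar>\<psi> x\<bar>"] by simp
        then show ?thesis using True by (simp add: abs_mult)
      qed simp
    qed
  qed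
  define s where "s = sqrt (2 / (2 * real k + 1))"
  have s_pos: "s > 0" unfolding s_def by simp
  have s2: "s * s = 2 / (2 * real k + 1)" unfolding s_def by simp
  have ipow: "integrable lborel (\<lambda>y::real. indicator {-1..1} y *\<^sub>R (y^(2*k)))"
    by (rule borel_integrable_compact) (auto simp: compact_Icc intro!: continuous_on_power continuous_on_id)
  have pow_int: "(\<integral>y. indicator {-1..1} (y::real) *\<^sub>R (y^(2*k)) \<partial>lborel) = 2 / (2 * real k + 1)"
  proof -
    have "(\<integral>y. indicator {-1..1} (y::real) *\<^sub>R (y^(2*k)) \<partial>lborel) = (\<integral>y. (y::real)^(2*k) * indicator {-1..1} y \<partial>lborel)"
      by (simp add: mult.commute)
    also have "\<dots> = (1^Suc (2*k) - (-1)^Suc (2*k)) / Suc (2*k)"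
      by (rule integral_power) simp
    also have "\<dots> = 2 / (2 * real k + 1)" by simp
    finally show ?thesis .
  qed
  have isq: "integrable lborel (\<lambda>x. indicator {-1..1} x *\<^sub>R (\<psi> x)\<^sup>2)"
    using sq unfolding set_integrable_def .
  have "(\<integral>y. indicator {-1..1} y *\<^sub>R (\<bar>\<psi> y\<bar> * \<bar>y\<bar>^k) \<partial>lborel)
       \<le> (\<integral>y. ((s/2) * (indicator {-1..1} y *\<^sub>R (\<psi> y)\<^sup>2) + (1/(2 * s)) * (indicator {-1..1} y *\<^sub>R (y^(2*k)))) \<partial>lborel)"
  proof (rule integral_mono[OF i1])
    show "integrable lborel (\<lambda>y. (s/2) * (indicator {-1..1} y *\<^sub>R (\<psi> y)\<^sup>2) + (1/(2 * s)) * (indicator {-1..1} y *\<^sub>R (y^(2*k))))"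
      using isq ipow by auto
  next
    fix y :: real
    have "0 \<le> (s * \<bar>\<psi> y\<bar> - \<bar>y\<bar>^k)\<^sup>2" by simp
    then have "2 * s * (\<bar>\<psi> y\<bar> * \<bar>y\<bar>^k) \<le> s * s * (\<psi> y)\<^sup>2 + (\<bar>y\<bar>^k)\<^sup>2"
      by (simp add: power2_eq_square algebra_simps)
    moreover have "(\<bar>y\<bar>^k)\<^sup>2 = y^(2*k)"
    proof -
      have "(\<bar>y\<bar>^k)\<^sup>2 = \<bar>y\<bar>^(k*2)" by (simp only: power_mult)
      also have "\<dots> = y^(2*k)" by (simp add: power_even_abs mult.commute)
      finally show ?thesis .
    qed
    ultimately have "2 * s * (\<bar>\<psi> y\<bar> * \<bar>y\<bar>^k) \<le> s * s * (\<psi> y)\<^sup>2 + y^(2*k)" by simp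
    then have "\<bar>\<psi> y\<bar> * \<bar>y\<bar>^k \<le> (s/2) * (\<psi> y)\<^sup>2 + (1/(2 * s)) * y^(2*k)"
      using s_pos by (simp add: field_simps)
    then show "indicator {-1..1} y *\<^sub>R (\<bar>\<psi> y\<bar> * \<bar>y\<bar>^k) \<le> (s/2) * (indicator {-1..1} y *\<^sub>R (\<psi> y)\<^sup>2) + (1/(2 * s)) * (indicator {-1..1} y *\<^sub>R (y^(2*k)))"
      by (auto simp: indicator_def)
  qed
  also have "\<dots> = (s/2) * 1 + (1/(2 * s)) * (2 / (2 * real k + 1))"
    using isq ipow norm1 pow_int unfolding set_lebesgue_integral_def by simp
  also have "\<dots> = s" unfolding s2[symmetric] using s_pos by (simp add: field_simps)
  finally show "(\<integral>y. indicator {-1..1} y *\<^sub>R (\<bar>\<psi> y\<bar> * \<bar>y\<bar>^k) \<partial>lborel) \<le> sqrt (2 / (2 * real k + 1))"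
    unfolding s_def .
qed



lemma main_bound:
  fixes c :: real and \<psi> :: "real \<Rightarrow> real" and \<mu> :: complex
  assumes c: "c > 0"
    and meas[measurable]: "\<psi> \<in> borel_measurable lborel"
    and sq: "set_integrable lborel {-1..1} (\<lambda>x. (\<psi> x)\<^sup>2)"
    and norm1: "(LINT x:{-1..1}|lborel. (\<psi> x)\<^sup>2) = 1"
    and eig: "AE x in lborel. x \<in> {-1..1} \<longrightarrow>
                  finite_fourier c (\<lambda>y. complex_of_real (\<psi> y)) x = \<mu> * complex_of_real (\<psi> x)"
    and mu_nz: "\<mu> \<noteq> 0"
  shows "\<bar>LINT x:{-1..1}|lborel. legendre_norm k x * \<psi> x\<bar>
           \<le> (c / 2) ^ k * sqrt pi / Gamma (real k + 3 / 2) * (1 / cmod \<mu>)"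
proof -
  define Bk where "Bk = sqrt pi / (2^k * Gamma (real k + 3/2))"
  define A where "A = sqrt (real k + 1/2) * (c^k * Bk)"
  define \<beta> where "\<beta> = (LINT x:{-1..1}|lborel. legendre_norm k x * \<psi> x)"
  define F where "F x y = (indicator {-1..1} x *\<^sub>R complex_of_real (legendre_norm k x)) *
       (indicator {-1..1} y *\<^sub>R (cis (c*x*y) * complex_of_real (\<psi> y)))" for x y :: real
  have ip: "integrable lborel (\<lambda>x. indicator {-1..1} x *\<^sub>R \<psi> x)"
    by (rule psi_integrable[OF meas sq])
  have ipc: "integrable lborel (\<lambda>y. indicator {-1..1} y *\<^sub>R (cis (c*x*y) * complex_of_real (\<psi> y)))" for x
  proof (rule Bochner_Integration.integrable_bound[OF ip])
    show "(\<lambda>y. indicator {-1..1} y *\<^sub>R (cis (c*x*y) * complex_of_real (\<psi> y))) \<in> borel_measurable lborel"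
      by measurable
    show "AE y in lborel. norm (indicator {-1..1} y *\<^sub>R (cis (c*x*y) * complex_of_real (\<psi> y))) \<le> norm (indicator {-1..1} y *\<^sub>R \<psi> y)"
      by (rule AE_I2) (simp add: norm_mult)
  qed
  have Fmeas: "(\<lambda>(x,y). F x y) \<in> borel_measurable (lborel \<Otimes>\<^sub>M lborel)"
    unfolding F_def by measurable
  have Lint: "integrable lborel (\<lambda>x. indicator {-1..1} x *\<^sub>R \<bar>legendre_norm k x\<bar>)"
    by (rule borel_integrable_compact) (auto simp: compact_Icc intro!: continuous_intros cont_legendre_norm)
  define C where "C = (\<integral>y. indicator {-1..1} y *\<^sub>R \<bar>\<psi> y\<bar> \<partial>lborel)"
  have Fint: "integrable (lborel \<Otimes>\<^sub>M lborel) (\<lambda>(x,y). F x y)"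
  proof (rule lborel_pair.Fubini_integrable)
    show "(\<lambda>(x,y). F x y) \<in> borel_measurable (lborel \<Otimes>\<^sub>M lborel)" by (rule Fmeas)
    have nF: "(\<integral>y. norm (case_prod F (x, y)) \<partial>lborel) = (indicator {-1..1} x *\<^sub>R \<bar>legendre_norm k x\<bar>) * C" for x
    proof -
      have "(\<integral>y. norm (case_prod F (x, y)) \<partial>lborel) = (\<integral>y. (indicator {-1..1} x *\<^sub>R \<bar>legendre_norm k x\<bar>) * (indicator {-1..1} y *\<^sub>R \<bar>\<psi> y\<bar>) \<partial>lborel)"
        by (rule Bochner_Integration.integral_cong) (auto simp: F_def norm_mult indicator_def)
      also have "\<dots> = (indicator {-1..1} x *\<^sub>R \<bar>legendre_norm k x\<bar>) * C"
        unfolding C_def by (rule integral_mult_right_zero)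
      finally show ?thesis .
    qed
    show "integrable lborel (\<lambda>x. \<integral>y. norm (case_prod F (x, y)) \<partial>lborel)"
      unfolding nF using Lint by (rule integrable_mult_left)
    show "AE x in lborel. integrable lborel (\<lambda>y. case_prod F (x, y))"
    proof (rule AE_I2)
      fix x
      have "integrable lborel (\<lambda>y. F x y)"
        unfolding F_def by (rule integrable_mult_right) (rule ipc)
      then show "integrable lborel (\<lambda>y. case_prod F (x, y))" by simp
    qed
  qed
  have fub: "(\<integral>y. (\<integral>x. F x y \<partial>lborel) \<partial>lborel) = (\<integral>x. (\<integral>y. F x y \<partial>lborel) \<partial>lborel)"
    by (rule lborel_pair.Fubini_integral[OF Fint])
  have Qmeas: "(\<lambda>x. finite_fourier c (\<lambda>y. complex_of_real (\<psi> y)) x) \<in> borel_measurable lborel"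
    unfolding finite_fourier_def set_lebesgue_integral_def
    by (rule lborel.borel_measurable_lebesgue_integral) measurable
  have r1: "(\<integral>y. F x y \<partial>lborel) = (indicator {-1..1} x *\<^sub>R complex_of_real (legendre_norm k x)) * finite_fourier c (\<lambda>y. complex_of_real (\<psi> y)) x" for x
    unfolding F_def finite_fourier_def set_lebesgue_integral_def by (rule integral_mult_right_zero)
  have r2: "(\<integral>x. (\<integral>y. F x y \<partial>lborel) \<partial>lborel) = \<mu> * complex_of_real \<beta>"
  proof -
    have "(\<integral>x. (\<integral>y. F x y \<partial>lborel) \<partial>lborel) = (\<integral>x. (indicator {-1..1} x *\<^sub>R complex_of_real (legendre_norm k x)) * finite_fourier c (\<lambda>y. complex_of_real (\<psi> y)) x \<partial>lborel)"
      unfolding r1 ..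
    also have "\<dots> = (\<integral>x. (indicator {-1..1} x *\<^sub>R complex_of_real (legendre_norm k x)) * (\<mu> * complex_of_real (\<psi> x)) \<partial>lborel)"
    proof (rule integral_cong_AE)
      show "(\<lambda>x. (indicator {-1..1} x *\<^sub>R complex_of_real (legendre_norm k x)) * finite_fourier c (\<lambda>y. complex_of_real (\<psi> y)) x) \<in> borel_measurable lborel"
        using Qmeas by measurable
      show "(\<lambda>x. (indicator {-1..1} x *\<^sub>R complex_of_real (legendre_norm k x)) * (\<mu> * complex_of_real (\<psi> x))) \<in> borel_measurable lborel"
        by measurable
      show "AE x in lborel. (indicator {-1..1} x *\<^sub>R complex_of_real (legendre_norm k x)) * finite_fourier c (\<lambda>y. complex_of_real (\<psi> y)) x
          = (indicator {-1..1} x *\<^sub>R complex_of_real (legendre_norm k x)) * (\<mu> * complex_of_real (\<psi> x))"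
        using eig by eventually_elim (auto simp: indicator_def)
    qed
    also have "\<dots> = (\<integral>x. \<mu> * complex_of_real (indicator {-1..1} x *\<^sub>R (legendre_norm k x * \<psi> x)) \<partial>lborel)"
      by (rule Bochner_Integration.integral_cong) (auto simp: indicator_def)
    also have "\<dots> = \<mu> * complex_of_real \<beta>"
      unfolding \<beta>_def set_lebesgue_integral_def by (simp only: integral_mult_right_zero integral_complex_of_real)
    finally show ?thesis .
  qed
  have l1: "(\<integral>x. F x y \<partial>lborel) = (indicator {-1..1} y *\<^sub>R complex_of_real (\<psi> y)) * (LINT x:{-1..1}|lborel. complex_of_real (legendre_norm k x) * cis (c*x*y))" for y
  proof -
    have "(\<integral>x. F x y \<partial>lborel) = (\<integral>x. (indicator {-1..1} y *\<^sub>R complex_of_real (\<psi> y)) * (indicator {-1..1} x *\<^sub>R (complex_of_real (legendre_norm k x) * cis (c*x*y))) \<partial>lborel)"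
      by (rule Bochner_Integration.integral_cong) (auto simp: F_def indicator_def)
    also have "\<dots> = (indicator {-1..1} y *\<^sub>R complex_of_real (\<psi> y)) * (LINT x:{-1..1}|lborel. complex_of_real (legendre_norm k x) * cis (c*x*y))"
      unfolding set_lebesgue_integral_def by (rule integral_mult_right_zero)
    finally show ?thesis .
  qed
  have cs1: "integrable lborel (\<lambda>y. indicator {-1..1} y *\<^sub>R (\<bar>\<psi> y\<bar> * \<bar>y\<bar>^k))"
    and cs2: "(\<integral>y. indicator {-1..1} y *\<^sub>R (\<bar>\<psi> y\<bar> * \<bar>y\<bar>^k) \<partial>lborel) \<le> sqrt (2 / (2 * real k + 1))"
    using cs_bound[OF meas sq norm1] by auto
  have "norm (\<mu> * complex_of_real \<beta>) = norm (\<integral>y. (\<integral>x. F x y \<partial>lborel) \<partial>lborel)"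
    using fub r2 by simp
  also have "\<dots> \<le> (\<integral>y. A * (indicator {-1..1} y *\<^sub>R (\<bar>\<psi> y\<bar> * \<bar>y\<bar>^k)) \<partial>lborel)"
  proof (rule Bochner_Integration.integral_norm_bound_integral)
    show "integrable lborel (\<lambda>y. \<integral>x. F x y \<partial>lborel)"
      by (rule lborel_pair.integrable_snd[OF Fint])
    show "integrable lborel (\<lambda>y. A * (indicator {-1..1} y *\<^sub>R (\<bar>\<psi> y\<bar> * \<bar>y\<bar>^k)))"
      using cs1 by (rule integrable_mult_right)
  next
    fix y :: real
    have kb: "norm (LINT x:{-1..1}|lborel. complex_of_real (legendre_norm k x) * cis (c*x*y)) \<le> A * \<bar>y\<bar>^k"
      using kernel_bound[of k c y] c by (simp add: A_def Bk_def abs_mult power_mult_distrib mult_ac)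
    have "norm (\<integral>x. F x y \<partial>lborel) = (indicator {-1..1} y * \<bar>\<psi> y\<bar>) * norm (LINT x:{-1..1}|lborel. complex_of_real (legendre_norm k x) * cis (c*x*y))"
      unfolding l1 by (simp add: norm_mult)
    also have "\<dots> \<le> (indicator {-1..1} y * \<bar>\<psi> y\<bar>) * (A * \<bar>y\<bar>^k)"
      by (rule mult_left_mono[OF kb]) simp
    also have "\<dots> = A * (indicator {-1..1} y *\<^sub>R (\<bar>\<psi> y\<bar> * \<bar>y\<bar>^k))" by simp
    finally show "norm (\<integral>x. F x y \<partial>lborel) \<le> A * (indicator {-1..1} y *\<^sub>R (\<bar>\<psi> y\<bar> * \<bar>y\<bar>^k))" .
  qed
  also have "\<dots> = A * (\<integral>y. indicator {-1..1} y *\<^sub>R (\<bar>\<psi> y\<bar> * \<bar>y\<bar>^k) \<partial>lborel)"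
    by (rule integral_mult_right_zero)
  also have "\<dots> \<le> A * sqrt (2 / (2 * real k + 1))"
    by (rule mult_left_mono[OF cs2]) (simp add: A_def Bk_def c less_imp_le)
  also have "\<dots> = c^k * Bk"
  proof -
    have "sqrt (real k + 1/2) * sqrt (2 / (2 * real k + 1)) = 1"
      by (simp add: real_sqrt_mult[symmetric] field_simps)
    then show ?thesis unfolding A_def by (simp add: mult_ac)
  qed
  finally have "cmod \<mu> * \<bar>\<beta>\<bar> \<le> c^k * Bk" by (simp add: norm_mult)
  then have "\<bar>\<beta>\<bar> \<le> c^k * Bk / cmod \<mu>"
    using mu_nz by (simp add: field_simps)
  also have "\<dots> = (c / 2) ^ k * sqrt pi / Gamma (real k + 3 / 2) * (1 / cmod \<mu>)"
    by (simp add: Bk_def power_divide)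
  finally show ?thesis unfolding \<beta>_def .
qed


theorem lemma7:
  fixes c :: real and psi :: "nat \<Rightarrow> real \<Rightarrow> real" and mu :: "nat \<Rightarrow> complex"
  assumes "c > 0"
    and meas: "\<And>n. psi n \<in> borel_measurable lborel"
    and sq_int: "\<And>n. set_integrable lborel {-1..1} (\<lambda>x. (psi n x)\<^sup>2)"
    and normalized: "\<And>n. (LINT x:{-1..1}|lborel. (psi n x)\<^sup>2) = 1"
    and eigen: "\<And>n. AE x in lborel. x \<in> {-1..1} \<longrightarrow>
                  finite_fourier c (\<lambda>y. complex_of_real (psi n y)) x = mu n * complex_of_real (psi n x)"
    and mu_nz: "\<And>n. mu n \<noteq> 0"
  shows "\<And>n k. \<bar>LINT x:{-1..1}|lborel. legendre_norm k x * psi n x\<bar>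
           \<le> (c / 2) ^ k * sqrt pi / Gamma (real k + 3 / 2) * (1 / cmod (mu n))"
  by (rule main_bound[OF assms(1) meas sq_int normalized eigen mu_nz])

end
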